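(* Let $\Gamma$ be a Deza graph with parameters $(n,k,k-1,a)$, $k>1$, $\beta=1$. For an $NA$-vertex $x$, $x''=x$ (where $x''=(x')'$, which is defined since $x'$ is an $NA$-vertex).
   Context: A Deza graph with parameters $(n,k,b,a)$, $a\le b$, is a $k$-regular graph on $n$ vertices in which any two distinct vertices have $a$ or $b$ common neighbours; $\beta$ is the number of vertices $u\ne v$ with exactly $b$ common neighbours with a given vertex $v$. Since $\beta=1$, for each vertex $x$ let $x_b$ denote the unique vertex having $b=k-1$ common neighbours with $x$. A vertex $x$ is an $A$-vertex if $x$ is adjacent to $x_b$, and an $NA$-vertex otherwise. For an $NA$-vertex $x$, $x'$ denotes the unique neighbour of $x$ not adjacent to $x_b$; for an $NA$-vertex $x$ the vertex $x'$ is again an $NA$-vertex. *)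

theory Defs
  imports Main
begin

definition common :: "'a set \<Rightarrow> ('a \<Rightarrow> 'a \<Rightarrow> bool) \<Rightarrow> 'a \<Rightarrow> 'a \<Rightarrow> nat" where
  "common V E x y = card {z \<in> V. E x z \<and> E y z}"

definition deza_graph :: "'a set \<Rightarrow> ('a \<Rightarrow> 'a \<Rightarrow> bool) \<Rightarrow> nat \<Rightarrow> nat \<Rightarrow> nat \<Rightarrow> nat \<Rightarrow> bool" where
  "deza_graph V E n k b a \<longleftrightarrow>
     finite V \<and> card V = n \<and>
     (\<forall>x y. E x y \<longrightarrow> x \<in> V \<and> y \<in> V) \<and>
     (\<forall>x y. E x y \<longrightarrow> E y x) \<and>
     (\<forall>x. \<not> E x x) \<and>
     (\<forall>x\<in>V. card {y \<in> V. E x y} = k) \<and>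
     a \<le> b \<and>
     (\<forall>x\<in>V. \<forall>y\<in>V. x \<noteq> y \<longrightarrow> common V E x y = a \<or> common V E x y = b)"

definition beta :: "'a set \<Rightarrow> ('a \<Rightarrow> 'a \<Rightarrow> bool) \<Rightarrow> nat \<Rightarrow> 'a \<Rightarrow> nat" where
  "beta V E b v = card {u \<in> V. u \<noteq> v \<and> common V E u v = b}"

definition xb :: "'a set \<Rightarrow> ('a \<Rightarrow> 'a \<Rightarrow> bool) \<Rightarrow> nat \<Rightarrow> 'a \<Rightarrow> 'a" where
  "xb V E b x = (THE u. u \<in> V \<and> u \<noteq> x \<and> common V E x u = b)"

definition A_vertex :: "'a set \<Rightarrow> ('a \<Rightarrow> 'a \<Rightarrow> bool) \<Rightarrow> nat \<Rightarrow> 'a \<Rightarrow> bool" where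
  "A_vertex V E b x \<longleftrightarrow> x \<in> V \<and> E x (xb V E b x)"

definition NA_vertex :: "'a set \<Rightarrow> ('a \<Rightarrow> 'a \<Rightarrow> bool) \<Rightarrow> nat \<Rightarrow> 'a \<Rightarrow> bool" where
  "NA_vertex V E b x \<longleftrightarrow> x \<in> V \<and> \<not> E x (xb V E b x)"

definition xprime :: "'a set \<Rightarrow> ('a \<Rightarrow> 'a \<Rightarrow> bool) \<Rightarrow> nat \<Rightarrow> 'a \<Rightarrow> 'a" where
  "xprime V E b x = (THE y. y \<in> V \<and> E x y \<and> \<not> E y (xb V E b x))"

end

theory Submission
  imports Defs
begin

lemma common_sym:
  assumes "\<forall>x y. E x y \<longrightarrow> E y x"
  shows "common V E u v = common V E v u"
  unfolding common_def by (metis (no_types, lifting) Collect_cong)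

lemma beta_unique:
  assumes bet: "beta V E b v = 1" and u: "u \<in> V" "u \<noteq> v" "common V E u v = b"
    and w: "w \<in> V" "w \<noteq> v" "common V E w v = b"
  shows "w = u"
proof -
  have "card {u \<in> V. u \<noteq> v \<and> common V E u v = b} = 1" using bet by (simp add: beta_def)
  then obtain t where t: "{u \<in> V. u \<noteq> v \<and> common V E u v = b} = {t}" by (auto simp: card_1_singleton_iff)
  have "u \<in> {t}" "w \<in> {t}" using u w t by blast+
  then show ?thesis by simp
qed

lemma xb_eq:
  assumes sym: "\<forall>x y. E x y \<longrightarrow> E y x"
    and bet: "beta V E b v = 1" and u: "u \<in> V" "u \<noteq> v" "common V E v u = b"
  shows "xb V E b v = u"
  unfolding xb_def
proof (rule the_equality)
  show "u \<in> V \<and> u \<noteq> v \<and> common V E v u = b" using u by simp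
  fix w assume "w \<in> V \<and> w \<noteq> v \<and> common V E v w = b"
  then show "w = u" using beta_unique[OF bet, of u w] u common_sym[OF sym] by metis
qed

theorem lemma11:
  fixes V :: "'a set" and E :: "'a \<Rightarrow> 'a \<Rightarrow> bool" and n k a :: nat and x :: 'a
  assumes "deza_graph V E n k (k - 1) a"
    and "k > 1"
    and "\<forall>v\<in>V. beta V E (k - 1) v = 1"
    and "NA_vertex V E (k - 1) x"
  shows "xprime V E (k - 1) (xprime V E (k - 1) x) = x"
proof -
  define N where "N v = {z \<in> V. E v z}" for v
  have fin: "finite V" and inV: "\<And>x y. E x y \<Longrightarrow> x \<in> V \<and> y \<in> V"
    and sym: "\<forall>x y. E x y \<longrightarrow> E y x" and irr: "\<And>x. \<not> E x x"
    and deg: "\<And>v. v \<in> V \<Longrightarrow> card (N v) = k"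
    and dz: "\<And>u v. u \<in> V \<Longrightarrow> v \<in> V \<Longrightarrow> u \<noteq> v \<Longrightarrow> common V E u v = a \<or> common V E u v = k - 1"
    using assms(1) unfolding deza_graph_def N_def by auto
  have symE: "E u v \<longleftrightarrow> E v u" for u v using sym by blast
  have cN: "common V E u v = card (N u \<inter> N v)" for u v
    unfolding common_def N_def by (rule arg_cong[where f=card]) auto
  have finN: "finite (N v)" for v using fin unfolding N_def by auto
  have bet: "\<And>v. v \<in> V \<Longrightarrow> beta V E (k - 1) v = 1" using assms(3) by blast
  have xV: "x \<in> V" using assms(4) by (simp add: NA_vertex_def)
  have "card {u \<in> V. u \<noteq> x \<and> common V E u x = k - 1} = 1" using bet[OF xV] by (simp add: beta_def)
  then obtain y where yset: "{u \<in> V. u \<noteq> x \<and> common V E u x = k - 1} = {y}"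
    by (auto simp: card_1_singleton_iff)
  have yV: "y \<in> V" and yx: "y \<noteq> x" and cyx: "common V E y x = k - 1" using yset by blast+
  have cxy: "common V E x y = k - 1" using cyx common_sym[OF sym] by metis
  have xbx: "xb V E (k - 1) x = y" using xb_eq[OF sym bet[OF xV] yV yx cxy] .
  have nxy: "\<not> E x y" using assms(4) xbx by (simp add: NA_vertex_def)
  have cyx2: "common V E v y = k - 1 \<Longrightarrow> v \<in> V \<Longrightarrow> v \<noteq> y \<Longrightarrow> v = x" for v
    using beta_unique[OF bet[OF yV], of x v] xV yx cxy by auto
  have diff1: "card (N u - N v) = 1" if "u \<in> V" "common V E u v = k - 1" for u v
  proof -
    have "card (N u - N v) = card (N u) - card (N u \<inter> N v)"
      by (metis Diff_Int2 card_Diff_subset_Int finN finite_Int inf.idem)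
    thus ?thesis using deg[OF that(1)] that(2) cN assms(2) by simp
  qed
  obtain x' where x': "N x - N y = {x'}" using diff1[OF xV cxy] by (auto simp: card_1_singleton_iff)
  obtain y' where y': "N y - N x = {y'}" using diff1[OF yV cyx] by (auto simp: card_1_singleton_iff)
  have Ex'x: "E x x'" and nyx': "\<not> E y x'" using x' unfolding N_def by auto
  have Eyy': "E y y'" and nxy': "\<not> E x y'" using y' unfolding N_def by auto
  have x'V: "x' \<in> V" using inV Ex'x by blast
  have y'V: "y' \<in> V" using inV Eyy' by blast
  have xp1: "xprime V E (k - 1) x = x'"
    unfolding xprime_def xbx
  proof (rule the_equality)
    show "x' \<in> V \<and> E x x' \<and> \<not> E x' y" using x'V Ex'x nyx' symE by blast
    fix w assume "w \<in> V \<and> E x w \<and> \<not> E w y"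
    then have "w \<in> N x - N y" unfolding N_def using symE by blast
    then show "w = x'" using x' by blast
  qed
  define C where "C = N x \<inter> N y"
  have Nx: "N x = insert x' C" and x'C: "x' \<notin> C" using x' unfolding C_def by auto
  have Ny: "N y = insert y' C" and y'C: "y' \<notin> C" using y' unfolding C_def by auto
  have key: "E w x' \<longleftrightarrow> E w y'" if w: "w \<in> V" "w \<noteq> x" "w \<noteq> y" for w
  proof -
    have c1: "common V E w x \<noteq> k - 1"
    proof
      assume "common V E w x = k - 1"
      then have "w \<in> {y}" using yset w by blast
      thus False using w by simp
    qed
    have c2: "common V E w y \<noteq> k - 1" using cyx2 common_sym[OF sym] w by metis
    have "common V E w x = common V E w y" using dz[OF w(1) xV w(2)] dz[OF w(1) yV w(3)] c1 c2 by auto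
    then have eq: "card (N w \<inter> insert x' C) = card (N w \<inter> insert y' C)" using cN Nx Ny by simp
    have finC: "finite (N w \<inter> C)" using finN by blast
    have e1: "card (N w \<inter> insert x' C) = card (N w \<inter> C) + (if E w x' then 1 else 0)"
      using x'C finC x'V by (auto simp: N_def Int_insert_right)
    have e2: "card (N w \<inter> insert y' C) = card (N w \<inter> C) + (if E w y' then 1 else 0)"
      using y'C finC y'V by (auto simp: N_def Int_insert_right)
    show ?thesis using eq e1 e2 by (auto split: if_splits)
  qed
  have sub: "N x' - {x} \<subseteq> N y'"
  proof
    fix w assume "w \<in> N x' - {x}"
    then have wV: "w \<in> V" and E1: "E x' w" and wx: "w \<noteq> x" unfolding N_def by auto
    have "w \<noteq> y" using E1 nyx' symE by blast
    then have "E w y'" using key[OF wV wx] E1 symE by blast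
    then show "w \<in> N y'" using wV symE unfolding N_def by blast
  qed
  have "N x' \<inter> N y' = N x' - {x}"
    using sub nxy' symE unfolding N_def by blast
  moreover have "x \<in> N x'" using Ex'x symE xV unfolding N_def by blast
  ultimately have "common V E x' y' = k - 1" using cN deg[OF x'V] finN by simp
  moreover have "y' \<noteq> x'" using Ex'x nxy' by blast
  ultimately have xbx': "xb V E (k - 1) x' = y'" using xb_eq[OF sym bet[OF x'V] y'V] by blast
  have "xprime V E (k - 1) x' = x"
    unfolding xprime_def xbx'
  proof (rule the_equality)
    show "x \<in> V \<and> E x' x \<and> \<not> E x y'" using xV Ex'x nxy' symE by blast
    fix w assume w: "w \<in> V \<and> E x' w \<and> \<not> E w y'"
    show "w = x"
    proof (rule ccontr)
      assume "w \<noteq> x"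
      then have "w \<in> N x' - {x}" using w unfolding N_def by blast
      then have "w \<in> N y'" using sub by blast
      then show False using w symE unfolding N_def by blast
    qed
  qed
  then show ?thesis using xp1 by simp
qed

end
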